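(* Let $q=p^{m_0}$ with $p$ prime, let $L$ be a finite extension of $\mathbb{F}_q((1/\theta))$ with ring of integers $\mathcal O$, and let $\rho$ be a permutation of $\{0,1,2,\ldots\}$. Let $f:\mathbb{Z}_p\to\mathcal O$ be continuous with Mahler expansion $f(y)=\sum_{j\ge0}c_j\binom{y}{j}$ (where $c_j\in\mathcal O$, $c_j\to0$). Then $$f^{\rho_1}(y)=\sum_{j\ge0}c_j\binom{y}{\rho_\ast j}.$$
   Context: For $y\in\mathbb{Z}_p$ written $q$-adically as $y=\sum_{j\ge0}c_jq^j$ with $0\le c_j<q$, set $\rho_\ast y:=\sum_{j\ge0}c_jq^{\rho(j)}$; this is a homeomorphism of $\mathbb{Z}_p$ stabilizing the nonnegative integers. Binomial coefficients $\binom{y}{j}$ are viewed as functions $\mathbb{Z}_p\to\mathcal O$ via reduction modulo $p$; every continuous $f:\mathbb{Z}_p\to\mathcal O$ has a unique such (Mahler) expansion with coefficients tending to $0$. Define $f^{\rho_1}(y):=f(\rho_\ast^{-1}y)$. *)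

theory Defs
  imports "HOL-Analysis.Analysis" "HOL-Computational_Algebra.Formal_Power_Series"
begin

text \<open>p-adic integers Z_p, represented through their q-adic digit sequences
  (q = p^m0); every y in Z_p has a unique expansion y = sum_j c_j q^j, 0 <= c_j < q.\<close>
definition Zp :: "nat \<Rightarrow> (nat \<Rightarrow> nat) set" where
  "Zp q = {y. \<forall>i. y i < q}"

definition trunc_q :: "nat \<Rightarrow> (nat \<Rightarrow> nat) \<Rightarrow> nat \<Rightarrow> nat" where
  "trunc_q q y N = (\<Sum>i<N. y i * q ^ i)"

definition nat_to_Zp :: "nat \<Rightarrow> nat \<Rightarrow> (nat \<Rightarrow> nat)" where
  "nat_to_Zp q n = (\<lambda>i. (n div q ^ i) mod q)"

text \<open>Binomial coefficient binom(y,j) on Z_p reduced mod p: the (p-adically continuous)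
  extension of n |-> (n choose j) mod p, i.e. the eventual value of
  (y mod q^N choose j) mod p as N -> infinity.\<close>
definition binom_Zp :: "nat \<Rightarrow> nat \<Rightarrow> (nat \<Rightarrow> nat) \<Rightarrow> nat \<Rightarrow> nat" where
  "binom_Zp p q y j = (THE r. \<forall>\<^sub>F N in sequentially. (trunc_q q y N choose j) mod p = r)"

text \<open>rho_* on Z_p: sum c_j q^j |-> sum c_j q^(rho j), i.e. the digit at position rho j is c_j.\<close>
definition rho_star :: "(nat \<Rightarrow> nat) \<Rightarrow> (nat \<Rightarrow> nat) \<Rightarrow> (nat \<Rightarrow> nat)" where
  "rho_star \<rho> y = y \<circ> inv \<rho>"

text \<open>rho_* restricted to nonnegative integers (the digits of n vanish beyond position n).\<close>
definition rho_star_nat :: "nat \<Rightarrow> (nat \<Rightarrow> nat) \<Rightarrow> nat \<Rightarrow> nat" where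
  "rho_star_nat q \<rho> n = (\<Sum>i\<le>n. ((n div q ^ i) mod q) * q ^ (\<rho> i))"

definition Zp_continuous :: "nat \<Rightarrow> ((nat \<Rightarrow> nat) \<Rightarrow> 'a::metric_space) \<Rightarrow> bool" where
  "Zp_continuous q f = (\<forall>y\<in>Zp q. \<forall>e>0. \<exists>N. \<forall>z\<in>Zp q.
      (\<forall>i<N. z i = y i) \<longrightarrow> dist (f z) (f y) < e)"

end

theory Submission imports Defs "HOL-Computational_Algebra.Polynomial" "HOL-Computational_Algebra.Primes" begin

lemma coeff_lin_pow: "coeff ([:1,1:]^n :: 'a::comm_semiring_1 poly) i = of_nat (n choose i)"
proof (cases "i \<le> n")
  case True thus ?thesis by (simp add: coeff_linear_poly_power)
next
  case False
  have "degree ([:1,1:]^n :: 'a poly) \<le> n"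
    using degree_power_le[of "[:1,1:]::'a poly" n] by simp
  then show ?thesis using False by (simp add: coeff_eq_0 binomial_eq_0)
qed

lemma lucas_step:
  fixes a b c d p q m :: nat
  assumes pr: "prime CHAR('a::comm_ring_1)" and qd: "q = CHAR('a) ^ m" and m: "m \<ge> 1"
    and a: "a < q" and c: "c < q"
  shows "(of_nat ((a + q*b) choose (c + q*d)) :: 'a) = of_nat (a choose c) * of_nat (b choose d)"
proof -
  define X :: "'a poly" where "X = monom 1 1"
  have lin: "[:1,1:] = X + 1" by (simp add: X_def monom_altdef one_pCons)
  have "(X + 1)^q = X^q + 1^q"
    by (rule freshmans_dream'[where n=m]) (use pr qd in auto)
  hence fq: "[:1,1:]^q = monom 1 q + (1::'a poly)" by (simp add: lin X_def monom_power)
  have "[:1,1:]^(a+q*b) = [:1,1:]^a * ([:1,1:]^q)^b" by (simp add: power_add power_mult)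
  also have "([:1,1:]^q)^b = (\<Sum>k\<le>b. monom (of_nat (b choose k)) (q*k) :: 'a poly)"
    unfolding fq binomial_ring
    by (intro sum.cong refl) (simp add: monom_power of_nat_poly, simp only: smult_monom mult_1_right)
  finally have eq: "[:1,1:]^(a+q*b) = (\<Sum>k\<le>b. monom (of_nat (b choose k)) (q*k) * [:1,1:]^a :: 'a poly)"
    by (simp add: sum_distrib_left mult.commute)
  have "of_nat ((a + q*b) choose (c + q*d)) = coeff ([:1,1:]^(a+q*b) :: 'a poly) (c+q*d)"
    by (simp add: coeff_lin_pow)
  also have "\<dots> = (\<Sum>k\<le>b. (if k = d then of_nat (a choose c) * of_nat (b choose d) else 0))"
    unfolding eq coeff_sum coeff_monom_mult
  proof (intro sum.cong refl)
    fix k assume "k \<in> {..b}"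
    show "(if c + q * d < q * k then 0 else of_nat (b choose k) * coeff ([:1, 1:] ^ a) (c + q * d - q * k)) =
         (if k = d then of_nat (a choose c) * of_nat (b choose d) else (0::'a))"
    proof (cases "k = d")
      case True thus ?thesis by (simp add: coeff_lin_pow mult.commute)
    next
      case False
      show ?thesis
      proof (cases "k < d")
        case True
        then obtain t where t: "d = k + Suc t" using less_imp_Suc_add by fastforce
        have "c + q*d - q*k = c + q * Suc t" by (simp add: t algebra_simps)
        moreover have "q \<le> q * Suc t" by simp
        ultimately have "a < c + q*d - q*k" using a by linarith
        hence "coeff ([:1,1:]^a :: 'a poly) (c + q*d - q*k) = 0" by (simp add: coeff_lin_pow binomial_eq_0)
        thus ?thesis using False True by simp
      next
        case nlt: False
        with False have "d < k" by simp
        hence "q*d + q \<le> q*k"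
          by (metis add.commute mult_Suc_right mult_le_mono2 Suc_leI)
        hence "c + q*d < q*k" using c by linarith
        thus ?thesis using False by simp
      qed
    qed
  qed
  also have "\<dots> = of_nat (a choose c) * of_nat (b choose d)"
    by (cases "d \<le> b") (auto simp: sum.delta binomial_eq_0)
  finally show ?thesis .
qed

lemma ofnat_eq_CHAR:
  "(of_nat x = (of_nat y :: 'a::comm_ring_1)) \<longleftrightarrow> x mod CHAR('a) = y mod CHAR('a)"
proof (induction x y rule: linorder_wlog)
  case (le x y)
  define z where "z = y - x"
  have yz: "y = x + z" using le by (auto simp: z_def)
  have "(CHAR('a) dvd z) = (x mod CHAR('a) = (x + z) mod CHAR('a))"
    using mod_eq_dvd_iff_nat[of x "x+z" "CHAR('a)"] by auto
  thus ?case by (simp add: yz of_nat_eq_0_iff_char_dvd)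
qed (simp add: eq_commute)

definition dig :: "nat \<Rightarrow> nat \<Rightarrow> nat \<Rightarrow> nat" where
  "dig q n i = n div q ^ i mod q"

lemma trunc_Suc: "trunc_q q y (Suc N) = y 0 + q * trunc_q q (y \<circ> Suc) N"
  unfolding trunc_q_def sum.lessThan_Suc_shift
  by (simp add: sum_distrib_left mult_ac)

lemma lucas_trunc:
  assumes pr: "prime CHAR('a::comm_ring_1)" and qd: "q = CHAR('a) ^ m" and m: "m \<ge> 1"
    and y: "\<forall>i. y i < q"
  shows "(of_nat (trunc_q q y N choose j) :: 'a) =
     (\<Prod>i<N. of_nat (y i choose dig q j i)) * of_nat (0 choose (j div q ^ N))"
  using y
proof (induction N arbitrary: y j)
  case 0 thus ?case by (simp add: trunc_q_def)
next
  case (Suc N)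
  have q0: "q > 0" using qd pr by (simp add: prime_gt_0_nat)
  have jd: "j mod q + q * (j div q) = j" by simp
  have A: "(of_nat (trunc_q q y (Suc N) choose j) :: 'a)
      = of_nat (y 0 choose j mod q) * of_nat (trunc_q q (y \<circ> Suc) N choose (j div q))"
  proof -
    have "(of_nat ((y 0 + q * trunc_q q (y \<circ> Suc) N) choose (j mod q + q * (j div q))) :: 'a)
        = of_nat (y 0 choose j mod q) * of_nat (trunc_q q (y \<circ> Suc) N choose (j div q))"
      by (rule lucas_step[OF pr qd m]) (use Suc.prems q0 in auto)
    thus ?thesis by (simp only: trunc_Suc jd)
  qed
  have B: "(of_nat (trunc_q q (y \<circ> Suc) N choose (j div q)) :: 'a) =
     (\<Prod>i<N. of_nat ((y \<circ> Suc) i choose dig q (j div q) i)) * (of_nat (0 choose (j div q div q ^ N)) :: 'a)"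
    by (rule Suc.IH) (use Suc.prems in auto)
  have dd: "\<And>i. j div q div q ^ i = j div q ^ Suc i" by (simp add: div_mult2_eq)
  show ?case
    unfolding prod.lessThan_Suc_shift A B by (simp add: dig_def dd mult_ac)
qed

lemma q_ge2: fixes p m q :: nat assumes "prime p" "m \<ge> 1" "q = p ^ m" shows "q \<ge> 2"
proof -
  have "p \<ge> 2" using assms prime_ge_2_nat by blast
  hence "p ^ 1 \<le> p ^ m" using assms by (intro power_increasing) auto
  thus ?thesis using \<open>p \<ge> 2\<close> assms by simp
qed

lemma dig_big: assumes "q \<ge> 2" "j \<le> i" shows "j div q ^ i = 0"
proof -
  have "j < 2 ^ j" by (rule less_exp)
  also have "\<dots> \<le> 2 ^ i" using assms by (intro power_increasing) auto
  also have "\<dots> \<le> q ^ i" using assms by (intro power_mono) auto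
  finally show ?thesis by simp
qed

lemma supp_sub: assumes "q \<ge> 2" shows "{i. dig q j i \<noteq> 0} \<subseteq> {..<j}"
proof
  fix i assume "i \<in> {i. dig q j i \<noteq> 0}"
  hence "dig q j i \<noteq> 0" by simp
  show "i \<in> {..<j}"
  proof (rule ccontr)
    assume "i \<notin> {..<j}"
    hence "j \<le> i" by simp
    hence "j div q ^ i = 0" by (rule dig_big[OF assms])
    thus False using \<open>dig q j i \<noteq> 0\<close> by (simp add: dig_def)
  qed
qed

lemma binom_Zp_prod:
  assumes pr: "prime CHAR('a::comm_ring_1)" and qd: "q = CHAR('a) ^ m" and m: "m \<ge> 1"
    and y: "y \<in> Zp q"
  shows "(of_nat (binom_Zp CHAR('a) q y j) :: 'a) = (\<Prod>i\<in>{i. dig q j i \<noteq> 0}. of_nat (y i choose dig q j i))"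
proof -
  let ?p = "CHAR('a)"
  have q2: "q \<ge> 2" using q_ge2[OF pr m qd] .
  have yi: "\<forall>i. y i < q" using y by (simp add: Zp_def)
  have key: "(of_nat (trunc_q q y N choose j) :: 'a) = (\<Prod>i\<in>{i. dig q j i \<noteq> 0}. of_nat (y i choose dig q j i))"
    if N: "N \<ge> j" for N
  proof -
    have "(of_nat (trunc_q q y N choose j) :: 'a) = (\<Prod>i<N. of_nat (y i choose dig q j i))"
    proof -
      have z0: "j div q ^ N = 0" by (rule dig_big[OF q2 N])
      show ?thesis using lucas_trunc[OF pr qd m yi, of N j] unfolding z0 by simp
    qed
    also have "\<dots> = (\<Prod>i\<in>{i. dig q j i \<noteq> 0}. of_nat (y i choose dig q j i))"
    proof (rule prod.mono_neutral_right)
      show "finite {..<N}" by simp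
      show "{i. dig q j i \<noteq> 0} \<subseteq> {..<N}" using supp_sub[OF q2, of j] N by fastforce
      show "\<forall>i\<in>{..<N} - {i. dig q j i \<noteq> 0}. (of_nat (y i choose dig q j i) :: 'a) = 1" by simp
    qed
    finally show ?thesis .
  qed
  define r where "r = (trunc_q q y j choose j) mod ?p"
  have ev: "\<forall>\<^sub>F N in sequentially. (trunc_q q y N choose j) mod ?p = r"
    unfolding eventually_sequentially
  proof (intro exI allI impI)
    fix N assume "N \<ge> j"
    hence "(of_nat (trunc_q q y N choose j) :: 'a) = of_nat (trunc_q q y j choose j)"
      using key[of N] key[of j] by simp
    thus "(trunc_q q y N choose j) mod ?p = r"
      unfolding r_def ofnat_eq_CHAR .
  qed
  have "binom_Zp ?p q y j = r"
    unfolding binom_Zp_def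
  proof (rule the_equality)
    show "\<forall>\<^sub>F N in sequentially. (trunc_q q y N choose j) mod ?p = r" by (rule ev)
  next
    fix r' assume "\<forall>\<^sub>F N in sequentially. (trunc_q q y N choose j) mod ?p = r'"
    with ev have "\<forall>\<^sub>F N in sequentially. r' = r" by eventually_elim simp
    thus "r' = r" using eventually_const[OF sequentially_bot] by blast
  qed
  hence "(of_nat (binom_Zp ?p q y j) :: 'a) = of_nat (trunc_q q y j choose j)"
    unfolding r_def ofnat_eq_CHAR by simp
  also have "\<dots> = (\<Prod>i\<in>{i. dig q j i \<noteq> 0}. of_nat (y i choose dig q j i))" by (rule key) simp
  finally show ?thesis .
qed

lemma dig_sum:
  assumes q0: "q > 0" and D: "\<forall>m. D m < q"
  shows "dig q (\<Sum>m<M. D m * q ^ m) k = (if k < M then D k else 0)"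
  using D
proof (induction M arbitrary: D k)
  case 0 thus ?case by (simp add: dig_def)
next
  case (Suc M)
  have s: "(\<Sum>m<Suc M. D m * q ^ m) = D 0 + q * (\<Sum>m<M. D (Suc m) * q ^ m)"
    unfolding sum.lessThan_Suc_shift by (simp add: sum_distrib_left mult_ac)
  show ?case
  proof (cases k)
    case 0 thus ?thesis using Suc.prems q0 unfolding s by (simp add: dig_def)
  next
    case (Suc k')
    have "dig q (D 0 + q * (\<Sum>m<M. D (Suc m) * q ^ m)) (Suc k') = dig q (\<Sum>m<M. D (Suc m) * q ^ m) k'"
    proof -
      let ?T = "\<Sum>m<M. D (Suc m) * q ^ m"
      have "(D 0 + q * ?T) div q = ?T" using Suc.prems q0 by simp
      thus ?thesis unfolding dig_def power_Suc div_mult2_eq by simp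
    qed
    also have "\<dots> = (if k' < M then D (Suc k') else 0)" by (rule Suc.IH) (use Suc.prems in auto)
    finally show ?thesis using Suc unfolding s by simp
  qed
qed

lemma dig_rho:
  assumes q2: "q \<ge> 2" and inj: "inj \<rho>"
  shows "dig q (rho_star_nat q \<rho> n) (\<rho> i) = dig q n i"
proof -
  define A where "A = \<rho> ` {..n}"
  define M where "M = Suc (Max A)"
  define D where "D m = (if m \<in> A then dig q n (inv \<rho> m) else 0)" for m
  have fA: "finite A" by (simp add: A_def)
  have AM: "A \<subseteq> {..<M}" using fA by (auto simp: M_def less_Suc_eq_le)
  have Dq: "\<forall>m. D m < q" using q2 by (simp add: D_def dig_def)
  have "rho_star_nat q \<rho> n = (\<Sum>i\<le>n. D (\<rho> i) * q ^ \<rho> i)"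
    unfolding rho_star_nat_def
  proof (intro sum.cong refl)
    fix x assume "x \<in> {..n}"
    hence "\<rho> x \<in> A" unfolding A_def by blast
    hence "D (\<rho> x) = dig q n x" unfolding D_def by (simp add: inv_f_f[OF inj])
    thus "n div q ^ x mod q * q ^ \<rho> x = D (\<rho> x) * q ^ \<rho> x" by (simp add: dig_def)
  qed
  also have "\<dots> = (\<Sum>m\<in>A. D m * q ^ m)"
    unfolding A_def by (rule sum.reindex[symmetric, unfolded comp_def]) (rule inj_on_subset[OF inj], simp)
  also have "\<dots> = (\<Sum>m<M. D m * q ^ m)"
    by (rule sum.mono_neutral_left) (use AM in \<open>simp_all add: D_def\<close>)
  finally have eq: "rho_star_nat q \<rho> n = (\<Sum>m<M. D m * q ^ m)" .
  have q0: "q > 0" using q2 by simp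
  show ?thesis
  proof (cases "i \<le> n")
    case True
    hence iA: "\<rho> i \<in> A" by (simp add: A_def)
    hence "\<rho> i < M" using AM by blast
    hence "dig q (rho_star_nat q \<rho> n) (\<rho> i) = D (\<rho> i)"
      unfolding eq using dig_sum[OF q0 Dq, of M "\<rho> i"] by simp
    also have "\<dots> = dig q n i" using iA by (simp add: D_def inv_f_f[OF inj])
    finally show ?thesis .
  next
    case False
    have "\<rho> i \<notin> A"
    proof
      assume "\<rho> i \<in> A"
      then obtain k where "k \<le> n" "\<rho> i = \<rho> k" by (auto simp: A_def)
      thus False using False injD[OF inj] by metis
    qed
    hence "dig q (rho_star_nat q \<rho> n) (\<rho> i) = 0"
      unfolding eq using dig_sum[OF q0 Dq, of M "\<rho> i"] by (simp add: D_def)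
    moreover have "dig q n i = 0" using dig_big[OF q2, of n i] False by (simp add: dig_def)
    ultimately show ?thesis by simp
  qed
qed

theorem corollary7p4:
  fixes p m0 q :: nat
    and \<rho> :: "nat \<Rightarrow> nat"
    and f :: "(nat \<Rightarrow> nat) \<Rightarrow> 'k::{field, finite} fps"
    and c :: "nat \<Rightarrow> 'k fps"
  assumes "prime p" and "m0 \<ge> 1" and "q = p ^ m0"
    and "CHAR('k) = p" and "\<exists>e\<ge>1. CARD('k) = q ^ e"
    and "bij \<rho>"
    and "Zp_continuous q f"
    and "c \<longlonglongrightarrow> 0"
    and "\<forall>y\<in>Zp q. (\<lambda>j. c j * of_nat (binom_Zp p q y j)) sums f y"
  shows "\<forall>y\<in>Zp q.
     (\<lambda>j. c j * of_nat (binom_Zp p q y (rho_star_nat q \<rho> j))) sums f (rho_star (inv \<rho>) y)"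
proof
  fix y assume y: "y \<in> Zp q"
  have chp: "CHAR('k fps) = p" using assms(4) by simp
  have pr: "prime CHAR('k fps)" using chp assms(1) by simp
  have qd: "q = CHAR('k fps) ^ m0" using chp assms(3) by simp
  have q2: "q \<ge> 2" using q_ge2[OF assms(1,2,3)] .
  have inj: "inj \<rho>" using assms(6) bij_is_inj by blast
  define z where "z = rho_star (inv \<rho>) y"
  have z: "z = y \<circ> \<rho>" unfolding z_def rho_star_def using assms(6) by (simp add: inv_inv_eq)
  have zZ: "z \<in> Zp q" using y by (simp add: z Zp_def)
  have eqj: "(of_nat (binom_Zp p q y (rho_star_nat q \<rho> j)) :: 'k fps) = of_nat (binom_Zp p q z j)" for j
  proof -
    let ?n = "rho_star_nat q \<rho> j"
    have "(of_nat (binom_Zp p q y ?n) :: 'k fps) = (\<Prod>i\<in>{i. dig q ?n i \<noteq> 0}. of_nat (y i choose dig q ?n i))"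
      using binom_Zp_prod[OF pr qd assms(2) y, of ?n] unfolding chp .
    also have "{i. dig q ?n i \<noteq> 0} = \<rho> ` {k. dig q j k \<noteq> 0}"
    proof -
      have su: "surj \<rho>" using assms(6) bij_is_surj by blast
      show ?thesis
      proof (rule set_eqI)
        fix i
        obtain k where k: "i = \<rho> k" using su by (metis surjD)
        show "i \<in> {i. dig q ?n i \<noteq> 0} \<longleftrightarrow> i \<in> \<rho> ` {k. dig q j k \<noteq> 0}"
          unfolding k mem_Collect_eq inj_image_mem_iff[OF inj] dig_rho[OF q2 inj] by simp
      qed
    qed
    also have "(\<Prod>i\<in>\<rho> ` {k. dig q j k \<noteq> 0}. (of_nat (y i choose dig q ?n i) :: 'k fps))
        = (\<Prod>k\<in>{k. dig q j k \<noteq> 0}. of_nat (z k choose dig q j k))"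
    proof -
      have io: "inj_on \<rho> {k. dig q j k \<noteq> 0}" using inj by (rule inj_on_subset) simp
      show ?thesis by (simp only: prod.reindex[OF io] comp_def z dig_rho[OF q2 inj])
    qed
    also have "\<dots> = of_nat (binom_Zp p q z j)"
      using binom_Zp_prod[OF pr qd assms(2) zZ, of j] unfolding chp by (rule sym)
    finally show ?thesis .
  qed
  have s: "(\<lambda>j. c j * of_nat (binom_Zp p q z j)) sums f z" using assms(9) zZ by blast
  have "(\<lambda>j. c j * of_nat (binom_Zp p q y (rho_star_nat q \<rho> j))) = (\<lambda>j. c j * of_nat (binom_Zp p q z j))"
    by (rule ext) (simp only: eqj)
  with s show "(\<lambda>j. c j * of_nat (binom_Zp p q y (rho_star_nat q \<rho> j))) sums f (rho_star (inv \<rho>) y)"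
    unfolding z_def by simp
qed

end
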